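(* Let $\Gamma$ be a finite simple graph and $\alpha\in[0,1/3)$. If $\mathcal C_1$ and $\mathcal C_2$ are two distinct $\alpha$-quasi-equivalence classes of $\Gamma$, then $\mathcal C_1\cap\mathcal C_2=\emptyset$.
   Context: For a vertex $v$ of a simple graph $\Gamma$, $\mathcal N_\Gamma(v)$ is the set of vertices adjacent to $v$; $A\Delta B=(A\cup B)\setminus(A\cap B)$. For $\alpha\in[0,1/3)$, a set $\mathcal C$ of vertices of $\Gamma$ is an $\alpha$-quasi-equivalence class of $\Gamma$ if (1) $|(\mathcal N_\Gamma(v)\cup\{v\})\Delta\mathcal C|\le\alpha|\mathcal C|$ for every $v\in\mathcal C$, and (2) $|\mathcal N_\Gamma(v)\cap\mathcal C|<(1-3\alpha)|\mathcal C|$ for every vertex $v\notin\mathcal C$. *)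

theory Defs
  imports Complex_Main
begin

definition simple_graph :: "'a set \<Rightarrow> ('a \<Rightarrow> 'a \<Rightarrow> bool) \<Rightarrow> bool" where
  "simple_graph V E \<longleftrightarrow> finite V \<and> (\<forall>u v. E u v \<longrightarrow> u \<in> V \<and> v \<in> V)
     \<and> (\<forall>u v. E u v \<longrightarrow> E v u) \<and> (\<forall>v. \<not> E v v)"

definition nbhd :: "'a set \<Rightarrow> ('a \<Rightarrow> 'a \<Rightarrow> bool) \<Rightarrow> 'a \<Rightarrow> 'a set" where
  "nbhd V E v = {u \<in> V. E v u}"

definition symdiff :: "'a set \<Rightarrow> 'a set \<Rightarrow> 'a set" where
  "symdiff A B = (A \<union> B) - (A \<inter> B)"

definition quasi_equiv_class :: "'a set \<Rightarrow> ('a \<Rightarrow> 'a \<Rightarrow> bool) \<Rightarrow> real \<Rightarrow> 'a set \<Rightarrow> bool" where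
  "quasi_equiv_class V E \<alpha> C \<longleftrightarrow> C \<subseteq> V
     \<and> (\<forall>v\<in>C. real (card (symdiff (nbhd V E v \<union> {v}) C)) \<le> \<alpha> * real (card C))
     \<and> (\<forall>v\<in>V - C. real (card (nbhd V E v \<inter> C)) < (1 - 3 * \<alpha>) * real (card C))"

end

theory Submission
  imports Defs
begin

lemma card_diff_sub: "finite A \<Longrightarrow> finite B \<Longrightarrow> A - C \<subseteq> (A - B) \<union> (B - C) \<Longrightarrow> card (A - C) \<le> card (A - B) + card (B - C)"
proof -
  assume f: "finite A" and fb: "finite B" and s: "A - C \<subseteq> (A - B) \<union> (B - C)"
  have "card (A - C) \<le> card ((A - B) \<union> (B - C))"
  proof (rule card_mono[OF _ s])
    have "(A - B) \<union> (B - C) \<subseteq> A \<union> B" by blast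
    show "finite ((A - B) \<union> (B - C))" using f fb by simp
  qed
  also have "\<dots> \<le> card (A - B) + card (B - C)" by (rule card_Un_le)
  finally show ?thesis .
qed

lemma key:
  assumes sg: "simple_graph V E" and qa: "quasi_equiv_class V E \<alpha> A"
    and qb: "quasi_equiv_class V E \<alpha> B"
    and w: "w \<in> B" "w \<notin> A"
    and le: "real (card (A - B)) + \<alpha> * real (card B) \<le> 3 * \<alpha> * real (card A)"
  shows False
proof -
  have fV: "finite V" using sg by (simp add: simple_graph_def)
  have AV: "A \<subseteq> V" and BV: "B \<subseteq> V" using qa qb by (auto simp: quasi_equiv_class_def)
  have fA: "finite A" using fV AV finite_subset by blast
  have fB: "finite B" using fV BV finite_subset by blast
  define Nw where "Nw = nbhd V E w \<union> {w}"
  have fNw: "finite Nw" using fV by (simp add: Nw_def nbhd_def)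
  have wV: "w \<in> V" using w BV by blast
  have c1: "real (card (symdiff Nw B)) \<le> \<alpha> * real (card B)"
    using qb w unfolding quasi_equiv_class_def Nw_def by blast
  have c2: "real (card (nbhd V E w \<inter> A)) < (1 - 3*\<alpha>) * real (card A)"
    using qa w wV unfolding quasi_equiv_class_def by blast
  have "card (B - Nw) \<le> card (symdiff Nw B)"
    by (rule card_mono) (auto simp: symdiff_def fNw fB)
  with c1 have c3: "real (card (B - Nw)) \<le> \<alpha> * real (card B)" by linarith
  have "card (A - Nw) \<le> card (A - B) + card (B - Nw)"
    by (rule card_diff_sub) (auto simp: fA fB)
  with c3 le have c4: "real (card (A - Nw)) \<le> 3*\<alpha>*real (card A)" by linarith
  have eq: "nbhd V E w \<inter> A = A - (A - Nw)" using w by (auto simp: Nw_def)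
  have "card (nbhd V E w \<inter> A) = card A - card (A - Nw)"
    unfolding eq by (rule card_Diff_subset) (auto simp: fA)
  moreover have "card (A - Nw) \<le> card A" by (rule card_mono) (auto simp: fA)
  ultimately have "real (card (nbhd V E w \<inter> A)) = real (card A) - real (card (A - Nw))"
    by simp
  with c2 c4 show False by (simp add: algebra_simps)
qed

lemma AB_bound:
  assumes sg: "simple_graph V E" and qa: "quasi_equiv_class V E \<alpha> A"
    and qb: "quasi_equiv_class V E \<alpha> B" and v: "v \<in> A" "v \<in> B"
  shows "real (card (A - B)) \<le> \<alpha> * real (card A) + \<alpha> * real (card B)"
proof -
  have fV: "finite V" using sg by (simp add: simple_graph_def)
  define N where "N = nbhd V E v \<union> {v}"
  have fN: "finite N" using fV by (simp add: N_def nbhd_def)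
  have AV: "A \<subseteq> V" using qa by (auto simp: quasi_equiv_class_def)
  have fA: "finite A" using fV AV finite_subset by blast
  have fB: "finite B" using fV qb finite_subset by (auto simp: quasi_equiv_class_def)
  have c1: "real (card (symdiff N A)) \<le> \<alpha> * real (card A)"
    using qa v unfolding quasi_equiv_class_def N_def by blast
  have c2: "real (card (symdiff N B)) \<le> \<alpha> * real (card B)"
    using qb v unfolding quasi_equiv_class_def N_def by blast
  have "card (A - N) \<le> card (symdiff N A)"
    by (rule card_mono) (auto simp: symdiff_def fN fA)
  moreover have "card (N - B) \<le> card (symdiff N B)"
    by (rule card_mono) (auto simp: symdiff_def fN fB)
  moreover have "card (A - B) \<le> card (A - N) + card (N - B)"
    by (rule card_diff_sub) (auto simp: fA fN)
  ultimately show ?thesis using c1 c2 by linarith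
qed

lemma main_wlog:
  assumes sg: "simple_graph V E" and a0: "0 \<le> \<alpha>" and a1: "\<alpha> < 1/3"
    and qa: "quasi_equiv_class V E \<alpha> A"
    and qb: "quasi_equiv_class V E \<alpha> B" and ne: "A \<noteq> B"
    and v: "v \<in> A" "v \<in> B" and sz: "card B \<le> card A"
  shows False
proof -
  have fV: "finite V" using sg by (simp add: simple_graph_def)
  have AV: "A \<subseteq> V" and BV: "B \<subseteq> V" using qa qb by (auto simp: quasi_equiv_class_def)
  have fA: "finite A" using fV AV finite_subset by blast
  have fB: "finite B" using fV BV finite_subset by blast
  have ab: "real (card (A - B)) \<le> \<alpha> * real (card A) + \<alpha> * real (card B)"
    by (rule AB_bound[OF sg qa qb v])
  show False
  proof (cases "B \<subseteq> A")
    case False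
    then obtain w where w: "w \<in> B" "w \<notin> A" by blast
    have "\<alpha> * real (card B) \<le> \<alpha> * real (card A)" using sz a0 by (simp add: mult_left_mono)
    hence "real (card (A - B)) + \<alpha> * real (card B) \<le> 3 * \<alpha> * real (card A)" using ab by linarith
    thus False by (rule key[OF sg qa qb w])
  next
    case True
    then obtain w where w: "w \<in> A" "w \<notin> B" using ne by blast
    have e0: "B - A = {}" using True by blast
    have "card A = card B + card (A - B)"
      using True fA card_Diff_subset[of B A] card_mono[of A B] by (simp add: finite_subset)
    hence "real (card A) = real (card B) + real (card (A - B))" by simp
    with ab have "(1 - \<alpha>) * real (card A) \<le> (1 + \<alpha>) * real (card B)" by (simp add: algebra_simps)
    moreover have "(1 + \<alpha>) * real (card B) \<le> 2 * (1 - \<alpha>) * real (card B)" using a1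
      by (intro mult_right_mono) auto
    ultimately have "(1 - \<alpha>) * real (card A) \<le> (1 - \<alpha>) * (2 * real (card B))" by (simp add: algebra_simps)
    hence "real (card A) \<le> 2 * real (card B)" using a1 by simp
    hence "\<alpha> * real (card A) \<le> \<alpha> * (2 * real (card B))" using a0 by (rule mult_left_mono)
    hence "real (card (B - A)) + \<alpha> * real (card A) \<le> 3 * \<alpha> * real (card B)"
      using mult_nonneg_nonneg[OF a0 of_nat_0_le_iff[of "card B"]]
      unfolding e0 by (simp add: algebra_simps)
    thus False by (rule key[OF sg qb qa w])
  qed
qed

theorem proposition5p1:
  fixes V :: "'a set" and E :: "'a \<Rightarrow> 'a \<Rightarrow> bool" and \<alpha> :: real
    and C1 C2 :: "'a set"
  assumes "simple_graph V E"
    and "0 \<le> \<alpha>" and "\<alpha> < 1/3"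
    and "quasi_equiv_class V E \<alpha> C1"
    and "quasi_equiv_class V E \<alpha> C2"
    and "C1 \<noteq> C2"
  shows "C1 \<inter> C2 = {}"
proof (rule ccontr)
  assume "C1 \<inter> C2 \<noteq> {}"
  then obtain v where v: "v \<in> C1" "v \<in> C2" by blast
  show False
  proof (cases "card C2 \<le> card C1")
    case True
    show False by (rule main_wlog[OF assms v True])
  next
    case False
    hence "card C1 \<le> card C2" by simp
    show False by (rule main_wlog[OF assms(1-3,5,4) _ v(2,1) \<open>card C1 \<le> card C2\<close>]) (use assms(6) in auto)
  qed
qed

end
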